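(* Consider the two-type economy with abundant machines. 1. Fix a type $k\in\{A,B\}$ with knowledge $\boldsymbol h^k=(h^k_1,h^k_2)$. If $F(1,h^k_2)\ge F(h^k_1,1)$, let $\boldsymbol v^k=(1,0)$ and $\Delta_k=F(1,h^k_2)/c-1+c\,(1-F(\boldsymbol h^k))$; otherwise let $\boldsymbol v^k=(0,1)$ and $\Delta_k=F(h^k_1,1)/c-1+c\,(1-F(\boldsymbol h^k))$. If $\Delta_k\ge0$, then the type-$k$ equilibrium wage is maximized over $\boldsymbol m\in[0,1]^2$ at $\boldsymbol m=\boldsymbol v^k$ (AI as poor as possible in the dimension where type $k$ is strongest and as good as possible in the other); if $\Delta_k<0$, it is maximized at $\boldsymbol m=(1,1)$. Here "maximized at $\boldsymbol m_0$" means: for every $\boldsymbol m\in[0,1]^2$, every equilibrium at $\boldsymbol m$ and every equilibrium at $\boldsymbol m_0$, the type-$k$ wage at $\boldsymbol m$ is at most the type-$k$ wage at $\boldsymbol m_0$. 2. The machine knowledge maximizing total labor income $w^*=\phi^Aw^A+\phi^Bw^B$ need not be a vertex of $[0,1]^2$: there exist parameters $(F,c,\phi^A,\boldsymbol h^A,\boldsymbol h^B)$ of the two-type economy for which no vertex of $[0,1]^2$ maximizes $w^*$ over $[0,1]^2$.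
   Context: Two-type economy. Fix a cumulative distribution function $F$ on $[0,1]^2$ with a density $f$ that has full support on $[0,1]^2$ and $c\in(0,1)$. There is a mass $\phi^A\in(0,1)$ of type-$A$ humans with knowledge $\boldsymbol h^A\in(0,1)^2$, a mass $\phi^B=1-\phi^A$ of type-$B$ humans with knowledge $\boldsymbol h^B\in(0,1)^2$, and a mass $\mu>0$ of machines with knowledge $\boldsymbol m\in[0,1]^2$; every agent has one unit of time. Write $\boldsymbol x\vee\boldsymbol y$ for the componentwise maximum and, for $F(\boldsymbol x)<1$, $n(\boldsymbol x)=\frac1{c(1-F(\boldsymbol x))}$. Given wages $w^A,w^B\ge0$ and rental $r\ge0$, the firm types and profits are: single-layer non-automated of type $k$ (one type-$k$ human) $F(\boldsymbol h^k)-w^k$; single-layer automated $F(\boldsymbol m)-r$; bottom-automated of type $k$ (one type-$k$ solver, $n(\boldsymbol m)$ machine workers; available when $F(\boldsymbol m)<1$) $n(\boldsymbol m)[F(\boldsymbol m\vee\boldsymbol h^k)-r]-w^k$; top-automated of type $k$ (one machine solver, $n(\boldsymbol h^k)$ type-$k$ workers) $n(\boldsymbol h^k)[F(\boldsymbol m\vee\boldsymbol h^k)-w^k]-r$; $BA$ firm (one type-$B$ solver, $n(\boldsymbol h^A)$ type-$A$ workers) $n(\boldsymbol h^A)[F(\boldsymbol h^A\vee\boldsymbol h^B)-w^A]-w^B$; $AB$ firm (one type-$A$ solver, $n(\boldsymbol h^B)$ type-$B$ workers) $n(\boldsymbol h^B)[F(\boldsymbol h^A\vee\boldsymbol h^B)-w^B]-w^A$.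 A feasible allocation assigns nonnegative masses of type-$A$ humans, type-$B$ humans and machines to these firm types, in the per-firm proportions just listed, so that all humans of each type and all machines are employed. An equilibrium is a feasible allocation with prices $(w^A,w^B,r)\ge0$ such that all firm types have nonpositive profit and types used with positive mass earn zero profit. Abundance: $\mu>\max_{k\in\{A,B\}}\max\Big\{\frac1{c(1-F(1,h^k_2))},\frac1{c(1-F(h^k_1,1))}\Big\}$. Total labor income $w^*=\phi^Aw^A+\phi^Bw^B$ is the same in every equilibrium at a given $\boldsymbol m$. *)

theory Defs
  imports "HOL-Analysis.Analysis"
begin

datatype htype = TA | TB

definition unit_sq :: "(real \<times> real) set" where
  "unit_sq = {x. 0 \<le> fst x \<and> fst x \<le> 1 \<and> 0 \<le> snd x \<and> snd x \<le> 1}"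

definition open_unit_sq :: "(real \<times> real) set" where
  "open_unit_sq = {x. 0 < fst x \<and> fst x < 1 \<and> 0 < snd x \<and> snd x < 1}"

text \<open>F is the CDF on [0,1]^2 of a density f with full support on [0,1]^2.\<close>
definition cdf_with_density :: "(real \<times> real \<Rightarrow> real) \<Rightarrow> (real \<times> real \<Rightarrow> real) \<Rightarrow> bool" where
  "cdf_with_density F f \<longleftrightarrow>
     (\<forall>x\<in>unit_sq. 0 \<le> f x) \<and>
     (\<forall>x\<in>unit_sq. (f has_integral F x) (cbox (0,0) x)) \<and>
     F (1,1) = 1 \<and>
     (\<forall>a\<in>unit_sq. \<forall>b\<in>unit_sq. fst a < fst b \<longrightarrow> snd a < snd b \<longrightarrow>
        integral (cbox a b) f > 0)"

definition vmax :: "real \<times> real \<Rightarrow> real \<times> real \<Rightarrow> real \<times> real" where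
  "vmax x y = (max (fst x) (fst y), max (snd x) (snd y))"

definition nspan :: "(real \<times> real \<Rightarrow> real) \<Rightarrow> real \<Rightarrow> real \<times> real \<Rightarrow> real" where
  "nspan F c x = 1 / (c * (1 - F x))"

definition phi :: "real \<Rightarrow> htype \<Rightarrow> real" where
  "phi phiA k = (if k = TA then phiA else 1 - phiA)"

datatype firm = SLH htype | SLM | Bot htype | Top htype | BA | AB

definition all_firms :: "firm list" where
  "all_firms = [SLH TA, SLH TB, SLM, Bot TA, Bot TB, Top TA, Top TB, BA, AB]"

definition hum_req :: "(real \<times> real \<Rightarrow> real) \<Rightarrow> real \<Rightarrow> (htype \<Rightarrow> real \<times> real)
     \<Rightarrow> firm \<Rightarrow> htype \<Rightarrow> real" where
  "hum_req F c h j k = (case j of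
      SLH k' \<Rightarrow> (if k = k' then 1 else 0)
    | SLM \<Rightarrow> 0
    | Bot k' \<Rightarrow> (if k = k' then 1 else 0)
    | Top k' \<Rightarrow> (if k = k' then nspan F c (h k') else 0)
    | BA \<Rightarrow> (if k = TA then nspan F c (h TA) else 1)
    | AB \<Rightarrow> (if k = TB then nspan F c (h TB) else 1))"

definition mach_req :: "(real \<times> real \<Rightarrow> real) \<Rightarrow> real \<Rightarrow> real \<times> real \<Rightarrow> firm \<Rightarrow> real" where
  "mach_req F c m j = (case j of
      SLH _ \<Rightarrow> 0
    | SLM \<Rightarrow> 1
    | Bot _ \<Rightarrow> nspan F c m
    | Top _ \<Rightarrow> 1
    | BA \<Rightarrow> 0
    | AB \<Rightarrow> 0)"

definition available :: "(real \<times> real \<Rightarrow> real) \<Rightarrow> real \<times> real \<Rightarrow> firm \<Rightarrow> bool" where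
  "available F m j = (case j of Bot _ \<Rightarrow> F m < 1 | _ \<Rightarrow> True)"

definition profit :: "(real \<times> real \<Rightarrow> real) \<Rightarrow> real \<Rightarrow> (htype \<Rightarrow> real \<times> real) \<Rightarrow> real \<times> real
     \<Rightarrow> (htype \<Rightarrow> real) \<Rightarrow> real \<Rightarrow> firm \<Rightarrow> real" where
  "profit F c h m w r j = (case j of
      SLH k \<Rightarrow> F (h k) - w k
    | SLM \<Rightarrow> F m - r
    | Bot k \<Rightarrow> nspan F c m * (F (vmax m (h k)) - r) - w k
    | Top k \<Rightarrow> nspan F c (h k) * (F (vmax m (h k)) - w k) - r
    | BA \<Rightarrow> nspan F c (h TA) * (F (vmax (h TA) (h TB)) - w TA) - w TB
    | AB \<Rightarrow> nspan F c (h TB) * (F (vmax (h TA) (h TB)) - w TB) - w TA)"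

text \<open>An equilibrium at machine knowledge m: q gives the mass of firms of each type.\<close>
definition equilibrium ::
  "(real \<times> real \<Rightarrow> real) \<Rightarrow> real \<Rightarrow> real \<Rightarrow> (htype \<Rightarrow> real \<times> real) \<Rightarrow> real \<Rightarrow> real \<times> real
   \<Rightarrow> (firm \<Rightarrow> real) \<Rightarrow> (htype \<Rightarrow> real) \<Rightarrow> real \<Rightarrow> bool" where
  "equilibrium F c phiA h mu m q w r \<longleftrightarrow>
     (\<forall>j. 0 \<le> q j) \<and>
     (\<forall>j. \<not> available F m j \<longrightarrow> q j = 0) \<and>
     (\<forall>k. sum_list (map (\<lambda>j. q j * hum_req F c h j k) all_firms) = phi phiA k) \<and>
     sum_list (map (\<lambda>j. q j * mach_req F c m j) all_firms) = mu \<and>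
     (\<forall>k. 0 \<le> w k) \<and> 0 \<le> r \<and>
     (\<forall>j. available F m j \<longrightarrow> profit F c h m w r j \<le> 0) \<and>
     (\<forall>j. available F m j \<longrightarrow> 0 < q j \<longrightarrow> profit F c h m w r j = 0)"

definition two_type_economy ::
  "(real \<times> real \<Rightarrow> real) \<Rightarrow> (real \<times> real \<Rightarrow> real) \<Rightarrow> real \<Rightarrow> real \<Rightarrow> (htype \<Rightarrow> real \<times> real) \<Rightarrow> real \<Rightarrow> bool" where
  "two_type_economy F f c phiA h mu \<longleftrightarrow>
     cdf_with_density F f \<and> 0 < c \<and> c < 1 \<and> 0 < phiA \<and> phiA < 1 \<and>
     (\<forall>k. h k \<in> open_unit_sq) \<and> 0 < mu"

definition abundant :: "(real \<times> real \<Rightarrow> real) \<Rightarrow> real \<Rightarrow> (htype \<Rightarrow> real \<times> real) \<Rightarrow> real \<Rightarrow> bool" where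
  "abundant F c h mu \<longleftrightarrow>
     (\<forall>k. mu > nspan F c (1, snd (h k)) \<and> mu > nspan F c (fst (h k), 1))"

definition total_labor_income :: "real \<Rightarrow> (htype \<Rightarrow> real) \<Rightarrow> real" where
  "total_labor_income phiA w = phiA * w TA + (1 - phiA) * w TB"

definition wage_maximized_at ::
  "(real \<times> real \<Rightarrow> real) \<Rightarrow> real \<Rightarrow> real \<Rightarrow> (htype \<Rightarrow> real \<times> real) \<Rightarrow> real \<Rightarrow> htype \<Rightarrow> real \<times> real \<Rightarrow> bool" where
  "wage_maximized_at F c phiA h mu k m0 \<longleftrightarrow>
     (\<forall>m\<in>unit_sq. \<forall>q w r q0 w0 r0.
        equilibrium F c phiA h mu m q w r \<longrightarrow> equilibrium F c phiA h mu m0 q0 w0 r0 \<longrightarrow>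
        w k \<le> w0 k)"

definition income_maximized_at ::
  "(real \<times> real \<Rightarrow> real) \<Rightarrow> real \<Rightarrow> real \<Rightarrow> (htype \<Rightarrow> real \<times> real) \<Rightarrow> real \<Rightarrow> real \<times> real \<Rightarrow> bool" where
  "income_maximized_at F c phiA h mu m0 \<longleftrightarrow>
     (\<forall>m\<in>unit_sq. \<forall>q w r q0 w0 r0.
        equilibrium F c phiA h mu m q w r \<longrightarrow> equilibrium F c phiA h mu m0 q0 w0 r0 \<longrightarrow>
        total_labor_income phiA w \<le> total_labor_income phiA w0)"

definition vertices :: "(real \<times> real) set" where
  "vertices = {(0,0), (1,0), (0,1), (1,1)}"

definition strong_dir :: "(real \<times> real \<Rightarrow> real) \<Rightarrow> real \<times> real \<Rightarrow> real \<times> real" where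
  "strong_dir F hk = (if F (1, snd hk) \<ge> F (fst hk, 1) then (1,0) else (0,1))"

definition Delta :: "(real \<times> real \<Rightarrow> real) \<Rightarrow> real \<Rightarrow> real \<times> real \<Rightarrow> real" where
  "Delta F c hk = (if F (1, snd hk) \<ge> F (fst hk, 1)
                   then F (1, snd hk) / c - 1 + c * (1 - F hk)
                   else F (fst hk, 1) / c - 1 + c * (1 - F hk))"

end

theory Submission
  imports Defs
begin

lemma cbox_sub: "0 \<le> a \<Longrightarrow> 0 \<le> b \<Longrightarrow> a \<le> c \<Longrightarrow> b \<le> d \<Longrightarrow> cbox (0::real,0::real) (a,b) \<subseteq> cbox (0,0) (c,d)"
  by (auto simp: cbox_Pair_eq)

lemma cdf_int:
  assumes "cdf_with_density F f" "x \<in> unit_sq"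
  shows "(f has_integral F x) (cbox (0,0) x)"
  using assms by (auto simp: cdf_with_density_def)

lemma usq_box: "x \<in> unit_sq \<Longrightarrow> cbox (0,0) x \<subseteq> unit_sq"
  by (cases x) (auto simp: unit_sq_def cbox_Pair_eq)

lemma cdf_mono:
  assumes cdf: "cdf_with_density F f" and x: "x \<in> unit_sq" and y: "y \<in> unit_sq"
    and le: "fst x \<le> fst y" "snd x \<le> snd y"
  shows "F x \<le> F y"
proof -
  have ix: "(f has_integral F x) (cbox (0,0) x)" and iy: "(f has_integral F y) (cbox (0,0) y)"
    using cdf_int[OF cdf] x y by auto
  have sub: "cbox (0,0) x \<subseteq> cbox (0,0) y"
    using x le by (cases x, cases y) (auto simp: unit_sq_def cbox_Pair_eq)
  have nn: "\<forall>z\<in>cbox (0,0) y. 0 \<le> f z" using cdf usq_box[OF y] by (auto simp: cdf_with_density_def)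
  have "integral (cbox (0,0) x) f \<le> integral (cbox (0,0) y) f"
    by (rule integral_subset_le[OF sub]) (use ix iy nn in \<open>auto simp: has_integral_integrable\<close>)
  thus ?thesis using ix iy by (simp add: integral_unique)
qed

lemma cdf_nonneg:
  assumes cdf: "cdf_with_density F f" and x: "x \<in> unit_sq"
  shows "0 \<le> F x"
proof -
  have ix: "(f has_integral F x) (cbox (0,0) x)" using cdf_int[OF cdf x] .
  have nn: "\<And>z. z\<in>cbox (0,0) x \<Longrightarrow> 0 \<le> f z" using cdf usq_box[OF x] by (auto simp: cdf_with_density_def)
  have "0 \<le> integral (cbox (0,0) x) f" by (rule integral_nonneg) (use ix nn in \<open>auto simp: has_integral_integrable\<close>)
  thus ?thesis using ix by (simp add: integral_unique)
qed

lemma cdf_le1: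
  assumes cdf: "cdf_with_density F f" and x: "x \<in> unit_sq"
  shows "F x \<le> 1"
proof -
  have "F x \<le> F (1,1)" by (rule cdf_mono[OF cdf x]) (use x in \<open>auto simp: unit_sq_def\<close>)
  thus ?thesis using cdf by (simp add: cdf_with_density_def)
qed

lemma cdf_zero1:
  assumes cdf: "cdf_with_density F f" and "0 \<le> a" "a \<le> 1"
  shows "F (a,0) = 0"
proof -
  have ix: "(f has_integral F (a,0)) (cbox (0,0) (a,0))" using cdf_int[OF cdf] assms by (auto simp: unit_sq_def)
  have "(f has_integral 0) (cbox (0,0) (a,(0::real)))" by (rule has_integral_null) (simp add: content_Pair)
  thus ?thesis using ix has_integral_unique by blast
qed

lemma cdf_zero2:
  assumes cdf: "cdf_with_density F f" and "0 \<le> a" "a \<le> 1"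
  shows "F (0,a) = 0"
proof -
  have ix: "(f has_integral F (0,a)) (cbox (0,0) (0,a))" using cdf_int[OF cdf] assms by (auto simp: unit_sq_def)
  have "(f has_integral 0) (cbox (0,0) ((0::real),a))" by (rule has_integral_null) (simp add: content_Pair)
  thus ?thesis using ix has_integral_unique by blast
qed


lemma cdf_strict1:
  assumes cdf: "cdf_with_density F f" and a: "0 \<le> a" "a < 1"
  shows "F (a,1) < 1"
proof -
  have i11: "(f has_integral 1) (cbox (0,0) (1,1))" using cdf_int[OF cdf, of "(1,1)"] cdf
    by (auto simp: unit_sq_def cdf_with_density_def)
  have ia: "(f has_integral F (a,1)) (cbox (0,0) (a,1))" using cdf_int[OF cdf, of "(a,1)"] a by (auto simp: unit_sq_def)
  have k: "((1::real),(0::real)) \<in> Basis" by (simp add: Basis_prod_def)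
  have e1: "cbox (0,0) (1,1) \<inter> {x. x \<bullet> (1::real,0::real) \<le> a} = cbox (0,0) (a,1)"
    using a by (auto simp: cbox_Pair_eq)
  have e2: "cbox (0,0) (1,1) \<inter> {x. x \<bullet> (1::real,0::real) \<ge> a} = cbox (a,0) (1,1)"
    using a by (auto simp: cbox_Pair_eq)
  have intb: "f integrable_on cbox (a,0) (1,1)"
    by (rule integrable_on_subcbox[OF has_integral_integrable[OF i11]]) (use a in \<open>auto simp: cbox_Pair_eq\<close>)
  have pos: "integral (cbox (a,0) (1,1)) f > 0"
    using cdf a by (auto simp: cdf_with_density_def unit_sq_def)
  have "(f has_integral (F (a,1) + integral (cbox (a,0) (1,1)) f)) (cbox (0,0) (1,1))"
    by (rule has_integral_split[OF _ _ k, of _ _ _ _ a]) (use ia intb e1 e2 in \<open>auto simp: integrable_integral\<close>)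
  hence "F (a,1) + integral (cbox (a,0) (1,1)) f = 1" using i11 has_integral_unique by blast
  thus ?thesis using pos by linarith
qed

lemma cdf_strict2:
  assumes cdf: "cdf_with_density F f" and a: "0 \<le> a" "a < 1"
  shows "F (1,a) < 1"
proof -
  have i11: "(f has_integral 1) (cbox (0,0) (1,1))" using cdf_int[OF cdf, of "(1,1)"] cdf
    by (auto simp: unit_sq_def cdf_with_density_def)
  have ia: "(f has_integral F (1,a)) (cbox (0,0) (1,a))" using cdf_int[OF cdf, of "(1,a)"] a by (auto simp: unit_sq_def)
  have k: "((0::real),(1::real)) \<in> Basis" by (simp add: Basis_prod_def)
  have e1: "cbox (0,0) (1,1) \<inter> {x. x \<bullet> (0::real,1::real) \<le> a} = cbox (0,0) (1,a)"
    using a by (auto simp: cbox_Pair_eq)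
  have e2: "cbox (0,0) (1,1) \<inter> {x. x \<bullet> (0::real,1::real) \<ge> a} = cbox (0,a) (1,1)"
    using a by (auto simp: cbox_Pair_eq)
  have intb: "f integrable_on cbox (0,a) (1,1)"
    by (rule integrable_on_subcbox[OF has_integral_integrable[OF i11]]) (use a in \<open>auto simp: cbox_Pair_eq\<close>)
  have pos: "integral (cbox (0,a) (1,1)) f > 0"
    using cdf a by (auto simp: cdf_with_density_def unit_sq_def)
  have "(f has_integral (F (1,a) + integral (cbox (0,a) (1,1)) f)) (cbox (0,0) (1,1))"
    by (rule has_integral_split[OF _ _ k, of _ _ _ _ a]) (use ia intb e1 e2 in \<open>auto simp: integrable_integral\<close>)
  hence "F (1,a) + integral (cbox (0,a) (1,1)) f = 1" using i11 has_integral_unique by blast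
  thus ?thesis using pos by linarith
qed


definition Mx :: "(real \<times> real \<Rightarrow> real) \<Rightarrow> real \<times> real \<Rightarrow> real" where
  "Mx F x = max (F (1, snd x)) (F (fst x, 1))"

lemma vmax_com: "vmax x y = vmax y x" by (simp add: vmax_def max.commute)
lemma vmax_eq: "fst x \<le> fst y \<Longrightarrow> snd x \<le> snd y \<Longrightarrow> vmax x y = y"
  by (cases x, cases y) (simp add: vmax_def max_def)
lemma vmax_in: "x \<in> unit_sq \<Longrightarrow> y \<in> unit_sq \<Longrightarrow> vmax x y \<in> unit_sq"
  by (auto simp: vmax_def unit_sq_def)

lemma G_le_M:
  assumes cdf: "cdf_with_density F f" and x: "x \<in> unit_sq" and y: "y \<in> unit_sq"
    and n: "\<not> (fst x \<le> fst y \<and> snd x \<le> snd y)"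
  shows "F (vmax x y) \<le> Mx F x"
proof (cases "fst x > fst y")
  case True
  have "F (vmax x y) \<le> F (fst x, 1)"
    by (rule cdf_mono[OF cdf vmax_in[OF x y]]) (use x y True in \<open>auto simp: vmax_def unit_sq_def\<close>)
  thus ?thesis by (simp add: Mx_def)
next
  case False
  hence "snd x > snd y" using n by auto
  hence "F (vmax x y) \<le> F (1, snd x)"
    by (intro cdf_mono[OF cdf vmax_in[OF x y]]) (use x y False in \<open>auto simp: vmax_def unit_sq_def\<close>)
  thus ?thesis by (simp add: Mx_def)
qed

lemma M_ge:
  assumes cdf: "cdf_with_density F f" and x: "x \<in> unit_sq"
  shows "F x \<le> Mx F x" "0 \<le> Mx F x" "Mx F x \<le> 1"
proof -
  have "F x \<le> F (fst x, 1)" by (rule cdf_mono[OF cdf x]) (use x in \<open>auto simp: unit_sq_def\<close>)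
  thus "F x \<le> Mx F x" by (simp add: Mx_def)
  thus "0 \<le> Mx F x" using cdf_nonneg[OF cdf x] by linarith
  have "F (1, snd x) \<le> 1" "F (fst x, 1) \<le> 1" by (rule cdf_le1[OF cdf]; use x in \<open>auto simp: unit_sq_def\<close>)+
  thus "Mx F x \<le> 1" by (simp add: Mx_def)
qed

lemma open_sq: "x \<in> open_unit_sq \<Longrightarrow> x \<in> unit_sq" by (auto simp: open_unit_sq_def unit_sq_def)

lemma Fh_lt1:
  assumes cdf: "cdf_with_density F f" and x: "x \<in> open_unit_sq"
  shows "F x < 1"
proof -
  have "F x \<le> F (fst x, 1)" by (rule cdf_mono[OF cdf open_sq[OF x]]) (use x in \<open>auto simp: open_unit_sq_def unit_sq_def\<close>)
  also have "\<dots> < 1" by (rule cdf_strict1[OF cdf]) (use x in \<open>auto simp: open_unit_sq_def\<close>)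
  finally show ?thesis .
qed

lemma alg_top:
  fixes c Fh G w s :: real
  assumes "0 < c" "Fh < 1" "1/(c*(1-Fh)) * (G - w) - s = 0"
  shows "w = G - s*(c*(1-Fh))"
proof -
  have d: "c*(1-Fh) > 0" using assms by (intro mult_pos_pos) auto
  have "(G-w)/(c*(1-Fh)) = s" using assms(3) by simp
  hence "G - w = s*(c*(1-Fh))" using d assms(1,2) by (auto simp: divide_eq_eq)
  thus ?thesis by simp
qed

lemma alg_bot:
  fixes c Fm G w s :: real
  assumes "0 < c" "0 \<le> Fm" "Fm < 1" "G \<le> 1" "Fm \<le> s" "1/(c*(1-Fm)) * (G - s) - w = 0"
  shows "w \<le> G/c"
proof -
  have d: "c*(1-Fm) > 0" using assms by (intro mult_pos_pos) auto
  have w: "w = (G - s)/(c*(1-Fm))" using assms(6) by simp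
  have "G - s \<le> G*(1-Fm)" using assms mult_right_mono[of G 1 Fm] by (simp add: algebra_simps)
  hence "(G - s)/(c*(1-Fm)) \<le> G*(1-Fm)/(c*(1-Fm))" using d by (intro divide_right_mono) auto
  also have "\<dots> = G/c" using assms by (simp add: field_simps)
  finally show ?thesis using w by simp
qed

lemma alg_bot0:
  fixes c Fm G w s :: real
  assumes "0 < c" "Fm < 1" "G \<le> s" "1/(c*(1-Fm)) * (G - s) - w = 0"
  shows "w \<le> 0"
proof -
  have d0: "c*(1-Fm) > 0" using assms by (intro mult_pos_pos) auto
  hence d: "1/(c*(1-Fm)) > 0" by simp
  have "1/(c*(1-Fm)) * (G - s) \<le> 0" using d assms(3) by (intro mult_nonneg_nonpos) auto
  thus ?thesis using assms(4) by simp
qed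


definition Tb :: "(real \<times> real \<Rightarrow> real) \<Rightarrow> real \<Rightarrow> real \<times> real \<Rightarrow> real" where
  "Tb F c x = max (Mx F x / c) (1 - c*(1 - F x))"

lemma Tb_facts:
  assumes cdf: "cdf_with_density F f" and c: "0 < c" "c < 1" and x: "x \<in> unit_sq"
  shows "Mx F x \<le> Tb F c x" "1 - c*(1 - F x) \<le> Tb F c x" "0 \<le> Tb F c x"
proof -
  have M: "0 \<le> Mx F x" using M_ge[OF cdf x] by auto
  have "Mx F x * 1 \<le> Mx F x / c * 1" using M c by (simp add: field_simps mult_left_le_one_le)
  hence "Mx F x \<le> Mx F x / c" by simp
  thus "Mx F x \<le> Tb F c x" by (simp add: Tb_def)
  show "1 - c*(1 - F x) \<le> Tb F c x" by (simp add: Tb_def)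
  show "0 \<le> Tb F c x" using M c by (simp add: Tb_def le_max_iff_disj)
qed

lemma worker_bound:
  assumes cdf: "cdf_with_density F f" and c: "0 < c" "c < 1" and x: "x \<in> open_unit_sq"
    and y: "y \<in> unit_sq" and s: "F y \<le> s"
    and p: "nspan F c x * (F (vmax y x) - w) - s = 0"
  shows "w \<le> Tb F c x"
proof -
  have xu: "x \<in> unit_sq" using open_sq[OF x] .
  have Fx: "0 \<le> F x" "F x < 1" using cdf_nonneg[OF cdf xu] Fh_lt1[OF cdf x] by auto
  have w: "w = F (vmax y x) - s*(c*(1-F x))"
    by (rule alg_top[OF c(1) Fx(2)]) (use p in \<open>simp add: nspan_def\<close>)
  have e: "0 \<le> c*(1-F x)" "c*(1-F x) \<le> 1" using c Fx by (auto simp: mult_le_one)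
  have Fy: "0 \<le> F y" "F y \<le> 1" using cdf_nonneg[OF cdf y] cdf_le1[OF cdf y] by auto
  have se: "F y * (c*(1-F x)) \<le> s * (c*(1-F x))" using s e by (intro mult_right_mono) auto
  show ?thesis
  proof (cases "fst x \<le> fst y \<and> snd x \<le> snd y")
    case True
    hence "vmax y x = y" by (subst vmax_com) (simp add: vmax_eq)
    hence "w \<le> F y - F y * (c*(1-F x))" using w se by simp
    also have "\<dots> = F y * (1 - c*(1-F x))" by (simp add: algebra_simps)
    also have "\<dots> \<le> 1 - c*(1-F x)" using Fy e by (simp add: mult_left_le_one_le)
    finally show ?thesis using Tb_facts[OF cdf c xu] by linarith
  next
    case False
    have "F (vmax y x) \<le> Mx F x" using G_le_M[OF cdf xu y False] by (simp add: vmax_com)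
    moreover have "0 \<le> s*(c*(1-F x))" using se Fy e by (meson mult_nonneg_nonneg order_trans)
    ultimately show ?thesis using w Tb_facts[OF cdf c xu] by linarith
  qed
qed

lemma solver_bound:
  assumes cdf: "cdf_with_density F f" and c: "0 < c" "c < 1" and x: "x \<in> open_unit_sq"
    and y: "y \<in> unit_sq" and y1: "F y < 1" and s: "F y \<le> s"
    and p: "1/(c*(1-F y)) * (F (vmax y x) - s) - w = 0"
  shows "w \<le> Tb F c x"
proof -
  have xu: "x \<in> unit_sq" using open_sq[OF x] .
  have Fy: "0 \<le> F y" "F y \<le> 1" using cdf_nonneg[OF cdf y] cdf_le1[OF cdf y] by auto
  show ?thesis
  proof (cases "fst x \<le> fst y \<and> snd x \<le> snd y")
    case True
    hence "vmax y x = y" by (subst vmax_com) (simp add: vmax_eq)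
    hence "w \<le> 0" using alg_bot0[OF c(1) y1 _ p] s by simp
    thus ?thesis using Tb_facts[OF cdf c xu] by linarith
  next
    case False
    have G: "F (vmax y x) \<le> Mx F x" using G_le_M[OF cdf xu y False] by (simp add: vmax_com)
    have "F (vmax y x) \<le> 1" using cdf_le1[OF cdf vmax_in[OF y xu]] .
    hence "w \<le> F (vmax y x) / c" using alg_bot[OF c(1) Fy(1) y1 _ s p] by simp
    also have "\<dots> \<le> Mx F x / c" using G c by (simp add: divide_right_mono)
    finally show ?thesis by (simp add: Tb_def)
  qed
qed

lemma eq_le: "equilibrium F c phiA h mu m q w r \<Longrightarrow> available F m j \<Longrightarrow> profit F c h m w r j \<le> 0"
  by (simp add: equilibrium_def)
lemma eq_pos: "equilibrium F c phiA h mu m q w r \<Longrightarrow> 0 < q j \<Longrightarrow> available F m j \<and> profit F c h m w r j = 0"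
  unfolding equilibrium_def by (metis less_irrefl)
lemma r_ge: "equilibrium F c phiA h mu m q w r \<Longrightarrow> F m \<le> r"
  using eq_le[of F c phiA h mu m q w r SLM] by (simp add: available_def profit_def)
lemma w_geF: "equilibrium F c phiA h mu m q w r \<Longrightarrow> F (h k) \<le> w k"
  using eq_le[of F c phiA h mu m q w r "SLH k"] by (simp add: available_def profit_def)

lemma econ:
  assumes "two_type_economy F f c phiA h mu"
  shows "cdf_with_density F f" "0 < c" "c < 1" "h k \<in> open_unit_sq" "h k \<in> unit_sq" "0 < phiA" "phiA < 1" "0 < mu"
  using assms open_sq by (auto simp: two_type_economy_def)

lemma bound_common:
  assumes ec: "two_type_economy F f c phiA h mu" and m: "m \<in> unit_sq"
    and eq: "equilibrium F c phiA h mu m q w r" and pos: "0 < q j" and hr: "hum_req F c h j k \<noteq> 0"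
  shows "w k \<le> Tb F c (h k)"
proof -
  note e = econ[OF ec]
  have av: "available F m j" and pz: "profit F c h m w r j = 0" using eq_pos[OF eq pos] by auto
  have rF: "F m \<le> r" using r_ge[OF eq] .
  show ?thesis
  proof (cases j)
    case (SLH k')
    hence "k' = k" using hr by (auto simp: hum_req_def split: if_splits)
    hence "w k = F (h k)" using pz SLH by (simp add: profit_def)
    moreover have "F (h k) \<le> Mx F (h k)" using M_ge[OF e(1) e(5)] by auto
    ultimately show ?thesis using Tb_facts[OF e(1,2,3) e(5)[of k]] by linarith
  next
    case SLM thus ?thesis using hr by (simp add: hum_req_def)
  next
    case (Bot k')
    hence kk: "k' = k" using hr by (auto simp: hum_req_def split: if_splits)
    have m1: "F m < 1" using av Bot by (simp add: available_def)
    show ?thesis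
      by (rule solver_bound[OF e(1,2,3,4) m m1 rF]) (use pz Bot kk in \<open>simp add: profit_def nspan_def\<close>)
  next
    case (Top k')
    hence kk: "k' = k" using hr by (auto simp: hum_req_def split: if_splits)
    show ?thesis
      by (rule worker_bound[OF e(1,2,3,4) m rF]) (use pz Top kk in \<open>simp add: profit_def\<close>)
  next
    case BA
    show ?thesis
    proof (cases k)
      case TA
      show ?thesis unfolding TA
        by (rule worker_bound[OF e(1,2,3) e(4)[of TA] e(5)[of TB] w_geF[OF eq]])
          (use pz BA vmax_com[of "h TB" "h TA"] in \<open>simp add: profit_def\<close>)
    next
      case TB
      have y1: "F (h TA) < 1" using Fh_lt1[OF e(1) e(4)] .
      show ?thesis unfolding TB
        by (rule solver_bound[OF e(1,2,3) e(4)[of TB] e(5)[of TA] y1 w_geF[OF eq]])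
          (use pz BA in \<open>simp add: profit_def nspan_def\<close>)
    qed
  next
    case AB
    show ?thesis
    proof (cases k)
      case TB
      show ?thesis unfolding TB
        by (rule worker_bound[OF e(1,2,3) e(4)[of TB] e(5)[of TA] w_geF[OF eq]])
          (use pz AB in \<open>simp add: profit_def vmax_com\<close>)
    next
      case TA
      have y1: "F (h TB) < 1" using Fh_lt1[OF e(1) e(4)] .
      show ?thesis unfolding TA
        by (rule solver_bound[OF e(1,2,3) e(4)[of TA] e(5)[of TB] y1 w_geF[OF eq]])
          (use pz AB in \<open>simp add: profit_def nspan_def vmax_com\<close>)
    qed
  qed
qed


lemma wage_upper:
  assumes ec: "two_type_economy F f c phiA h mu" and m: "m \<in> unit_sq"
    and eq: "equilibrium F c phiA h mu m q w r"
  shows "w k \<le> Tb F c (h k)"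
proof (rule ccontr)
  assume nb: "\<not> w k \<le> Tb F c (h k)"
  note e = econ[OF ec]
  have q0: "\<And>j. 0 \<le> q j" using eq by (simp add: equilibrium_def)
  have z: "\<And>j. q j * hum_req F c h j k = 0"
  proof -
    fix j
    show "q j * hum_req F c h j k = 0"
    proof (cases "q j > 0")
      case True
      hence "hum_req F c h j k = 0" using bound_common[OF ec m eq True] nb by blast
      thus ?thesis by simp
    next
      case False thus ?thesis using q0[of j] by simp
    qed
  qed
  have "sum_list (map (\<lambda>j. q j * hum_req F c h j k) all_firms) = phi phiA k"
    using eq by (simp add: equilibrium_def)
  moreover have "sum_list (map (\<lambda>j. q j * hum_req F c h j k) all_firms) = 0"
    by (simp only: z) (simp add: all_firms_def)
  moreover have "phi phiA k > 0" using e(6,7) by (simp add: phi_def)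
  ultimately show False by (simp add: all_firms_def)
qed

lemma nspan_ge1:
  assumes "0 < c" "c < 1" "0 \<le> (Fx::real)" "Fx < 1"
  shows "1 < 1/(c*(1-Fx))"
proof -
  have "0 < c*(1-Fx)" using assms by (intro mult_pos_pos) auto
  moreover have "c*(1-Fx) < 1" using assms by (smt (verit) mult_le_one mult_strict_right_mono)
  ultimately show ?thesis by simp
qed

lemma nspan_mono:
  assumes "0 < c" "(Fx::real) \<le> Fy" "Fy < 1"
  shows "1/(c*(1-Fx)) \<le> 1/(c*(1-Fy))"
proof -
  have "0 < c*(1-Fy)" using assms by (intro mult_pos_pos) auto
  moreover have "c*(1-Fy) \<le> c*(1-Fx)" using assms by (intro mult_left_mono) auto
  ultimately show ?thesis by (simp add: frac_le)
qed

lemma bot_term: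
  assumes ec: "two_type_economy F f c phiA h mu" and ab: "abundant F c h mu" and m: "m \<in> unit_sq"
    and eq: "equilibrium F c phiA h mu m q w r" and rg: "r > F m" and pos: "q (Bot k) > 0"
  shows "q (Bot k) * nspan F c m < mu * q (Bot k)"
proof -
  note e = econ[OF ec]
  have av: "F m < 1" and pz: "profit F c h m w r (Bot k) = 0" using eq_pos[OF eq pos] by (auto simp: available_def)
  have Fm0: "0 \<le> F m" using cdf_nonneg[OF e(1) m] .
  have d: "0 < c*(1-F m)" using e av by (intro mult_pos_pos) auto
  have wk: "0 \<le> w k" using eq by (simp add: equilibrium_def)
  have "nspan F c m * (F (vmax m (h k)) - r) = w k" using pz by (simp add: profit_def)
  hence "0 \<le> (F (vmax m (h k)) - r) / (c*(1-F m))" using wk by (simp add: nspan_def)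
  hence G: "F (vmax m (h k)) \<ge> r" using d by (simp add: zero_le_divide_iff)
  have nle: "\<not> (fst (h k) \<le> fst m \<and> snd (h k) \<le> snd m)"
  proof
    assume "fst (h k) \<le> fst m \<and> snd (h k) \<le> snd m"
    hence "vmax m (h k) = m" by (subst vmax_com) (simp add: vmax_eq)
    thus False using G rg by simp
  qed
  have hu: "h k \<in> open_unit_sq" using e(4) .
  have "nspan F c m < mu"
  proof (cases "fst m < fst (h k)")
    case True
    have "F m \<le> F (fst (h k), 1)" by (rule cdf_mono[OF e(1) m]) (use True m hu in \<open>auto simp: unit_sq_def open_unit_sq_def\<close>)
    moreover have "F (fst (h k), 1) < 1" by (rule cdf_strict1[OF e(1)]) (use hu in \<open>auto simp: open_unit_sq_def\<close>)
    ultimately have "nspan F c m \<le> nspan F c (fst (h k), 1)" unfolding nspan_def by (intro nspan_mono e(2))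
    thus ?thesis using ab by (simp add: abundant_def) (smt (verit))
  next
    case False
    hence s: "snd m < snd (h k)" using nle by auto
    have "F m \<le> F (1, snd (h k))" by (rule cdf_mono[OF e(1) m]) (use s m hu in \<open>auto simp: unit_sq_def open_unit_sq_def\<close>)
    moreover have "F (1, snd (h k)) < 1" by (rule cdf_strict2[OF e(1)]) (use hu in \<open>auto simp: open_unit_sq_def\<close>)
    ultimately have "nspan F c m \<le> nspan F c (1, snd (h k))" unfolding nspan_def by (intro nspan_mono e(2))
    thus ?thesis using ab by (simp add: abundant_def) (smt (verit))
  qed
  thus ?thesis using pos by (simp add: mult.commute)
qed

lemma top_term:
  assumes ec: "two_type_economy F f c phiA h mu" and ab: "abundant F c h mu"
    and pos: "t > 0"
  shows "t < mu * (nspan F c (h k) * t)"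
proof -
  note e = econ[OF ec]
  have hu: "h k \<in> open_unit_sq" using e(4) .
  have F1: "0 \<le> F (1, snd (h k))" "F (1, snd (h k)) < 1"
    using cdf_nonneg[OF e(1), of "(1, snd (h k))"] cdf_strict2[OF e(1), of "snd (h k)"] hu
    by (auto simp: unit_sq_def open_unit_sq_def)
  have "1 < nspan F c (1, snd (h k))" unfolding nspan_def by (rule nspan_ge1[OF e(2,3) F1])
  hence mu1: "1 < mu" using ab by (simp add: abundant_def) (smt (verit))
  have "1 < nspan F c (h k)" unfolding nspan_def
    by (rule nspan_ge1[OF e(2,3) cdf_nonneg[OF e(1) e(5)] Fh_lt1[OF e(1) hu]])
  hence "1 < mu * nspan F c (h k)" using mu1 by (smt (verit) mult_less_cancel_left2)
  hence "1 * t < (mu * nspan F c (h k)) * t" using pos by (intro mult_strict_right_mono) auto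
  thus ?thesis by (simp add: mult.assoc)
qed


lemma r_upper:
  assumes ec: "two_type_economy F f c phiA h mu" and ab: "abundant F c h mu" and m: "m \<in> unit_sq"
    and eq: "equilibrium F c phiA h mu m q w r"
  shows "r \<le> F m"
proof (rule ccontr)
  assume "\<not> r \<le> F m"
  hence rg: "r > F m" by simp
  note e = econ[OF ec]
  have q0: "\<And>j. 0 \<le> q j" using eq by (simp add: equilibrium_def)
  have qS: "q SLM = 0"
  proof (rule ccontr)
    assume "q SLM \<noteq> 0" hence "q SLM > 0" using q0[of SLM] by simp
    hence "profit F c h m w r SLM = 0" using eq_pos[OF eq] by blast
    thus False using rg by (simp add: profit_def)
  qed
  define n where "n = nspan F c m"
  define nA where "nA = nspan F c (h TA)"
  define nB where "nB = nspan F c (h TB)"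
  have nA0: "0 \<le> nA" and nB0: "0 \<le> nB" unfolding nA_def nB_def nspan_def
    using e(2) Fh_lt1[OF e(1) e(4)] by (auto intro!: mult_nonneg_nonneg simp: less_imp_le)
  have mach: "q SLM + q (Bot TA) * n + q (Bot TB) * n + q (Top TA) + q (Top TB) = mu"
    using eq by (simp add: equilibrium_def all_firms_def mach_req_def n_def)
  have hs: "\<And>k. sum_list (map (\<lambda>j. q j * hum_req F c h j k) all_firms) = phi phiA k"
    using eq unfolding equilibrium_def by blast
  have humA: "q (SLH TA) + q (Bot TA) + q (Top TA) * nA + q BA * nA + q AB = phiA"
    using hs[of TA] by (simp add: all_firms_def hum_req_def phi_def nA_def)
  have humB: "q (SLH TB) + q (Bot TB) + q (Top TB) * nB + q BA + q AB * nB = 1 - phiA"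
    using hs[of TB] by (simp add: all_firms_def hum_req_def phi_def nB_def)
  have hA: "q (Bot TA) + nA * q (Top TA) \<le> phiA"
    using humA q0 nA0 by (smt (verit) mult_nonneg_nonneg mult.commute)
  have hB: "q (Bot TB) + nB * q (Top TB) \<le> 1 - phiA"
    using humB q0 nB0 by (smt (verit) mult_nonneg_nonneg mult.commute)
  have sumle: "mu * (q (Bot TA) + nA * q (Top TA) + (q (Bot TB) + nB * q (Top TB))) \<le> mu * 1"
    using hA hB e(8) by (intro mult_left_mono) auto
  have bA: "q (Bot TA) * n \<le> mu * q (Bot TA)"
    using bot_term[OF ec ab m eq rg, of TA] q0[of "Bot TA"] unfolding n_def
    by (cases "q (Bot TA) > 0") auto
  have bB: "q (Bot TB) * n \<le> mu * q (Bot TB)"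
    using bot_term[OF ec ab m eq rg, of TB] q0[of "Bot TB"] unfolding n_def
    by (cases "q (Bot TB) > 0") auto
  have tA: "q (Top TA) \<le> mu * (nA * q (Top TA))"
    using top_term[OF ec ab, of "q (Top TA)" TA] q0[of "Top TA"] unfolding nA_def
    by (cases "q (Top TA) > 0") auto
  have tB: "q (Top TB) \<le> mu * (nB * q (Top TB))"
    using top_term[OF ec ab, of "q (Top TB)" TB] q0[of "Top TB"] unfolding nB_def
    by (cases "q (Top TB) > 0") auto
  have dist: "mu * (q (Bot TA) + nA * q (Top TA) + (q (Bot TB) + nB * q (Top TB)))
     = mu * q (Bot TA) + mu * (nA * q (Top TA)) + mu * q (Bot TB) + mu * (nB * q (Top TB))"
    by (simp add: algebra_simps)
  consider "q (Bot TA) > 0" | "q (Bot TB) > 0" | "q (Top TA) > 0" | "q (Top TB) > 0"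
    | "q (Bot TA) = 0 \<and> q (Bot TB) = 0 \<and> q (Top TA) = 0 \<and> q (Top TB) = 0"
    using q0[of "Bot TA"] q0[of "Bot TB"] q0[of "Top TA"] q0[of "Top TB"] by linarith
  thus False
  proof cases
    case 1
    have "q (Bot TA) * n < mu * q (Bot TA)" using bot_term[OF ec ab m eq rg 1] unfolding n_def .
    thus False using mach qS bB tA tB sumle dist by linarith
  next
    case 2
    have "q (Bot TB) * n < mu * q (Bot TB)" using bot_term[OF ec ab m eq rg 2] unfolding n_def .
    thus False using mach qS bA tA tB sumle dist by linarith
  next
    case 3
    have "q (Top TA) < mu * (nA * q (Top TA))" using top_term[OF ec ab 3] unfolding nA_def .
    thus False using mach qS bA bB tB sumle dist by linarith
  next
    case 4
    have "q (Top TB) < mu * (nB * q (Top TB))" using top_term[OF ec ab 4] unfolding nB_def .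
    thus False using mach qS bA bB tA sumle dist by linarith
  next
    case 5
    thus False using mach qS e(8) by simp
  qed
qed

lemma part1:
  assumes ec: "two_type_economy F f c phiA h mu" and ab: "abundant F c h mu"
  shows "(Delta F c (h k) \<ge> 0 \<longrightarrow> wage_maximized_at F c phiA h mu k (strong_dir F (h k))) \<and>
         (Delta F c (h k) < 0 \<longrightarrow> wage_maximized_at F c phiA h mu k (1,1))"
proof -
  note e = econ[OF ec]
  have hu: "h k \<in> open_unit_sq" using e(4) .
  have h1: "0 < fst (h k)" "fst (h k) < 1" "0 < snd (h k)" "snd (h k) < 1" using hu by (auto simp: open_unit_sq_def)
  have c1: "0 < c" "c < 1" using e by auto
  have low_v: "Mx F (h k) / c \<le> w0 k"
    if eq0: "equilibrium F c phiA h mu (strong_dir F (h k)) q0 w0 r0" for q0 w0 r0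
  proof (cases "F (1, snd (h k)) \<ge> F (fst (h k), 1)")
    case True
    have sd: "strong_dir F (h k) = (1,0)" using True by (simp add: strong_dir_def)
    have eq0': "equilibrium F c phiA h mu (1,0) q0 w0 r0" using eq0 sd by simp
    have F10: "F (1,0) = 0" using cdf_zero1[OF e(1)] by simp
    have r0: "r0 = 0" using r_upper[OF ec ab _ eq0'] r_ge[OF eq0'] F10 by (simp add: unit_sq_def)
    have "profit F c h (1,0) w0 r0 (Bot k) \<le> 0" by (rule eq_le[OF eq0']) (simp add: available_def F10)
    moreover have "vmax (1,0) (h k) = (1, snd (h k))" using h1 by (simp add: vmax_def)
    ultimately have "F (1, snd (h k)) / c \<le> w0 k" using F10 r0 by (simp add: profit_def nspan_def)
    moreover have "Mx F (h k) = F (1, snd (h k))" using True by (simp add: Mx_def)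
    ultimately show ?thesis by simp
  next
    case False
    have sd: "strong_dir F (h k) = (0,1)" using False by (simp add: strong_dir_def)
    have eq0': "equilibrium F c phiA h mu (0,1) q0 w0 r0" using eq0 sd by simp
    have F10: "F (0,1) = 0" using cdf_zero2[OF e(1)] by simp
    have r0: "r0 = 0" using r_upper[OF ec ab _ eq0'] r_ge[OF eq0'] F10 by (simp add: unit_sq_def)
    have "profit F c h (0,1) w0 r0 (Bot k) \<le> 0" by (rule eq_le[OF eq0']) (simp add: available_def F10)
    moreover have "vmax (0,1) (h k) = (fst (h k), 1)" using h1 by (simp add: vmax_def)
    ultimately have "F (fst (h k), 1) / c \<le> w0 k" using F10 r0 by (simp add: profit_def nspan_def)
    moreover have "Mx F (h k) = F (fst (h k), 1)" using False by (simp add: Mx_def)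
    ultimately show ?thesis by simp
  qed
  have low_11: "1 - c*(1 - F (h k)) \<le> w0 k"
    if eq0: "equilibrium F c phiA h mu (1,1) q0 w0 r0" for q0 w0 r0
  proof -
    have F11: "F (1,1) = 1" using e(1) by (simp add: cdf_with_density_def)
    have r0: "r0 \<le> 1" using r_upper[OF ec ab _ eq0] F11 by (simp add: unit_sq_def)
    have "profit F c h (1,1) w0 r0 (Top k) \<le> 0" by (rule eq_le[OF eq0]) (simp add: available_def)
    moreover have "vmax (1,1) (h k) = (1,1)" using h1 by (simp add: vmax_def)
    ultimately have p: "nspan F c (h k) * (1 - w0 k) \<le> r0" using F11 by (simp add: profit_def)
    have Fh: "0 \<le> F (h k)" "F (h k) < 1" using cdf_nonneg[OF e(1) e(5)] Fh_lt1[OF e(1) hu] by auto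
    have d: "0 < c*(1 - F (h k))" using c1 Fh by (intro mult_pos_pos) auto
    have "(1 - w0 k) / (c*(1 - F (h k))) \<le> 1" using p r0 by (simp add: nspan_def)
    hence "1 - w0 k \<le> c*(1 - F (h k))" using d by (simp add: divide_le_eq)
    thus ?thesis by simp
  qed
  have Dl: "Delta F c (h k) = Mx F (h k) / c - (1 - c*(1 - F (h k)))"
    by (simp add: Delta_def Mx_def)
  show ?thesis
  proof (intro conjI impI)
    assume D: "Delta F c (h k) \<ge> 0"
    show "wage_maximized_at F c phiA h mu k (strong_dir F (h k))"
      unfolding wage_maximized_at_def
    proof (intro ballI allI impI)
      fix m q w r q0 w0 r0
      assume m: "m \<in> unit_sq" and eq: "equilibrium F c phiA h mu m q w r"
        and eq0: "equilibrium F c phiA h mu (strong_dir F (h k)) q0 w0 r0"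
      have "w k \<le> Tb F c (h k)" using wage_upper[OF ec m eq] .
      also have "\<dots> = Mx F (h k) / c" using D Dl by (simp add: Tb_def)
      also have "\<dots> \<le> w0 k" using low_v[OF eq0] .
      finally show "w k \<le> w0 k" .
    qed
  next
    assume D: "Delta F c (h k) < 0"
    show "wage_maximized_at F c phiA h mu k (1,1)"
      unfolding wage_maximized_at_def
    proof (intro ballI allI impI)
      fix m q w r q0 w0 r0
      assume m: "m \<in> unit_sq" and eq: "equilibrium F c phiA h mu m q w r"
        and eq0: "equilibrium F c phiA h mu (1,1) q0 w0 r0"
      have "w k \<le> Tb F c (h k)" using wage_upper[OF ec m eq] .
      also have "\<dots> = 1 - c*(1 - F (h k))" using D Dl by (simp add: Tb_def)
      also have "\<dots> \<le> w0 k" using low_11[OF eq0] .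
      finally show "w k \<le> w0 k" .
    qed
  qed
qed


lemma all_htype: "(\<forall>k. P k) \<longleftrightarrow> P TA \<and> P TB"
  by (metis htype.exhaust)

lemma all_firm: "(\<forall>j. P j) \<longleftrightarrow> P (SLH TA) \<and> P (SLH TB) \<and> P SLM \<and> P (Bot TA) \<and> P (Bot TB)
   \<and> P (Top TA) \<and> P (Top TB) \<and> P BA \<and> P AB"
  apply (rule iffI)
   apply simp
  apply (intro allI)
  subgoal for j by (cases j; metis htype.exhaust)
  done

definition Fex :: "real \<times> real \<Rightarrow> real" where "Fex x = fst x * snd x"
definition hex :: "htype \<Rightarrow> real \<times> real" where
  "hex k = (case k of TA \<Rightarrow> (1/5, 1/10) | TB \<Rightarrow> (1/5, 9/10))"

lemma cdf_ex: "cdf_with_density Fex (\<lambda>x. 1)"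
  unfolding cdf_with_density_def
proof (intro conjI ballI impI)
  fix x :: "real \<times> real" assume x: "x \<in> unit_sq"
  obtain a b where ab: "x = (a,b)" by fastforce
  have "((\<lambda>x. 1::real) has_integral (a*b)) (cbox (0,0) (a,b))"
    using has_integral_const[of "1::real" "(0::real,0::real)" "(a,b)"] x ab
    by (simp add: content_Pair unit_sq_def)
  thus "((\<lambda>x. 1) has_integral Fex x) (cbox (0, 0) x)" using ab by (simp add: Fex_def)
next
  fix a b :: "real \<times> real" assume "a \<in> unit_sq" "b \<in> unit_sq" "fst a < fst b" "snd a < snd b"
  moreover obtain a1 a2 b1 b2 where "a = (a1,a2)" "b = (b1,b2)" by fastforce
  ultimately show "0 < integral (cbox a b) (\<lambda>x. 1::real)"
    by (simp add: content_Pair)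
qed (auto simp: Fex_def)


lemmas exdefs = equilibrium_def all_firm all_htype all_firms_def hum_req_def mach_req_def available_def
  profit_def nspan_def phi_def Fex_def hex_def vmax_def

lemma eq00: "20 < mu \<Longrightarrow> equilibrium Fex (1/2) (3/4) hex mu (0,0)
   (\<lambda>j. case j of SLM \<Rightarrow> mu - 2 | Bot k \<Rightarrow> (case k of TA \<Rightarrow> 3/4 | TB \<Rightarrow> 1/4) | _ \<Rightarrow> 0)
   (\<lambda>k. case k of TA \<Rightarrow> 1/25 | TB \<Rightarrow> 9/25) 0"
  by (simp add: exdefs)

lemma eq10: "20 < mu \<Longrightarrow> equilibrium Fex (1/2) (3/4) hex mu (1,0)
   (\<lambda>j. case j of SLM \<Rightarrow> mu - 2 | Bot k \<Rightarrow> (case k of TA \<Rightarrow> 3/4 | TB \<Rightarrow> 1/4) | _ \<Rightarrow> 0)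
   (\<lambda>k. case k of TA \<Rightarrow> 1/5 | TB \<Rightarrow> 9/5) 0"
  by (simp add: exdefs)

lemma eq01: "20 < mu \<Longrightarrow> equilibrium Fex (1/2) (3/4) hex mu (0,1)
   (\<lambda>j. case j of SLM \<Rightarrow> mu - 2 | Bot k \<Rightarrow> (case k of TA \<Rightarrow> 3/4 | TB \<Rightarrow> 1/4) | _ \<Rightarrow> 0)
   (\<lambda>k. case k of TA \<Rightarrow> 2/5 | TB \<Rightarrow> 2/5) 0"
  by (simp add: exdefs)

lemma eq11: "20 < mu \<Longrightarrow> equilibrium Fex (1/2) (3/4) hex mu (1,1)
   (\<lambda>j. case j of SLM \<Rightarrow> mu - 47/100 | Top k \<Rightarrow> (case k of TA \<Rightarrow> 147/400 | TB \<Rightarrow> 41/400) | _ \<Rightarrow> 0)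
   (\<lambda>k. case k of TA \<Rightarrow> 51/100 | TB \<Rightarrow> 59/100) 1"
  by (simp add: exdefs)

lemma eqs: "20 < mu \<Longrightarrow> equilibrium Fex (1/2) (3/4) hex mu (1,3/5)
   (\<lambda>j. case j of SLM \<Rightarrow> mu - 647/400 | Top TA \<Rightarrow> 147/400 | Bot TB \<Rightarrow> 1/4 | _ \<Rightarrow> 0)
   (\<lambda>k. case k of TA \<Rightarrow> 153/500 | TB \<Rightarrow> 3/2) (3/5)"
  by (simp add: exdefs)


lemma part2:
  "\<exists>F f c phiA h. (\<exists>mu. two_type_economy F f c phiA h mu \<and> abundant F c h mu) \<and>
            (\<forall>mu. two_type_economy F f c phiA h mu \<and> abundant F c h mu \<longrightarrow>
               (\<forall>v\<in>vertices. \<not> income_maximized_at F c phiA h mu v))"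
proof (rule exI[of _ Fex], rule exI[of _ "\<lambda>x. 1"], rule exI[of _ "1/2"], rule exI[of _ "3/4"],
    rule exI[of _ hex], intro conjI)
  have ec: "\<And>mu. 0 < mu \<Longrightarrow> two_type_economy Fex (\<lambda>x. 1) (1/2) (3/4) hex mu"
    using cdf_ex by (simp add: two_type_economy_def all_htype hex_def open_unit_sq_def)
  show "\<exists>mu. two_type_economy Fex (\<lambda>x. 1) (1/2) (3/4) hex mu \<and> abundant Fex (1/2) hex mu"
    by (rule exI[of _ 21]) (simp add: ec abundant_def all_htype hex_def nspan_def Fex_def)
  show "\<forall>mu. two_type_economy Fex (\<lambda>x. 1) (1/2) (3/4) hex mu \<and> abundant Fex (1/2) hex mu \<longrightarrow>
      (\<forall>v\<in>vertices. \<not> income_maximized_at Fex (1/2) (3/4) hex mu v)"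
  proof (intro allI impI ballI notI)
    fix mu v
    assume a: "two_type_economy Fex (\<lambda>x. 1) (1/2) (3/4) hex mu \<and> abundant Fex (1/2) hex mu"
      and v: "v \<in> vertices" and im: "income_maximized_at Fex (1/2) (3/4) hex mu v"
    have mu: "20 < mu" using a by (simp add: abundant_def all_htype hex_def nspan_def Fex_def)
    have ms: "(1, 3/5) \<in> unit_sq" by (simp add: unit_sq_def)
    note E = im[unfolded income_maximized_at_def, rule_format, OF ms eqs[OF mu]]
    from v show False
      unfolding vertices_def
    proof (elim insertE emptyE)
      assume vv: "v = (0,0)"
      show False using E[unfolded vv, OF eq00[OF mu]] by (simp add: total_labor_income_def)
    next
      assume vv: "v = (1,0)"
      show False using E[unfolded vv, OF eq10[OF mu]] by (simp add: total_labor_income_def)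
    next
      assume vv: "v = (0,1)"
      show False using E[unfolded vv, OF eq01[OF mu]] by (simp add: total_labor_income_def)
    next
      assume vv: "v = (1,1)"
      show False using E[unfolded vv, OF eq11[OF mu]] by (simp add: total_labor_income_def)
    qed
  qed
qed

theorem proposition8:
  shows "(\<forall>F f c phiA h mu k.
            two_type_economy F f c phiA h mu \<and> abundant F c h mu \<longrightarrow>
            (Delta F c (h k) \<ge> 0 \<longrightarrow> wage_maximized_at F c phiA h mu k (strong_dir F (h k))) \<and>
            (Delta F c (h k) < 0 \<longrightarrow> wage_maximized_at F c phiA h mu k (1,1)))
       \<and> (\<exists>F f c phiA h. (\<exists>mu. two_type_economy F f c phiA h mu \<and> abundant F c h mu) \<and>
            (\<forall>mu. two_type_economy F f c phiA h mu \<and> abundant F c h mu \<longrightarrow>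
               (\<forall>v\<in>vertices. \<not> income_maximized_at F c phiA h mu v)))"
  using part1 part2 by blast

end
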